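(* Let $T$ be a phylogenetic tree with leaf set $X$ and nonnegative branch lengths. Consider the symmetric two-state model on $T$: choose an arbitrary root vertex, choose its state in $\{0,1\}$ uniformly at random, and evolve states away from the root so that along each edge of length $t$ the state changes with probability $\tfrac12(1-e^{-2t})$, independently across edges. For $A\subseteq X$ let $s_A$ be the probability that the resulting states at the leaves are not constant over $A$, and let $\delta_A$ be the sum of branch lengths of the smallest subtree of $T$ connecting $A$. Let $\boldsymbol{\delta}$ and $\mathbf{s}$ be the vectors of $\delta_A$ and $s_A$ values, indexed by the nonempty subsets $A\subseteq X$ of even cardinality. Define the square matrix $\mathbf{G}$ indexed by these subsets by $\mathbf{G}_{AB}=2^{-|A|+1}$ if $B\subseteq A$ and $0$ otherwise. Then $\mathbf{G}$ is invertible with \[ (\mathbf{G}^{-1})_{AB}=\begin{cases}2^{|B|-1}\mathbb{E}_{|A|-|B|}, & B\subseteq A,\\ 0,&\text{otherwise},\end{cases} \] and \[ \boldsymbol{\delta}=-\mathbf{G}\log(\mathbf{1}-\mathbf{G}^{-1}\mathbf{s}), \] where $\mathbf{1}$ is the all-ones vector and $\log$ is applied entrywise.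
   Context: The Euler numbers $\mathbb{E}_k$ are defined by $\frac{1}{\cosh(x)}=\frac{2}{e^x+e^{-x}}=\sum_{k=0}^\infty \mathbb{E}_k\frac{x^k}{k!}$. A phylogenetic tree with leaf set $X$ is a tree whose leaves are bijectively labelled by $X$ and whose internal vertices have degree at least $3$. *)

theory Defs
  imports "HOL-Analysis.Analysis" "HOL-Computational_Algebra.Formal_Power_Series"
begin

text \<open>1/cosh x = 2/(e^x + e^-x) = sum E_k x^k / k!, as formal power series over the reals.\<close>
definition euler_num :: "nat \<Rightarrow> real" where
  "euler_num k = fact k * fps_nth (fps_const 2 * inverse (fps_exp 1 + fps_exp (-1))) k"

definition simple_graph :: "'v set \<Rightarrow> 'v set set \<Rightarrow> bool" where
  "simple_graph V E \<longleftrightarrow> finite V \<and> (\<forall>e\<in>E. e \<subseteq> V \<and> card e = 2)"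

definition degree :: "'v set set \<Rightarrow> 'v \<Rightarrow> nat" where
  "degree E v = card {e\<in>E. v \<in> e}"

definition reach :: "'v set set \<Rightarrow> 'v \<Rightarrow> 'v \<Rightarrow> bool" where
  "reach F u v \<longleftrightarrow> (u, v) \<in> {(x, y). {x, y} \<in> F}\<^sup>*"

definition is_cycle :: "'v set set \<Rightarrow> 'v list \<Rightarrow> bool" where
  "is_cycle E vs \<longleftrightarrow> length vs \<ge> 3 \<and> distinct vs \<and>
     (\<forall>i < length vs. {vs ! i, vs ! ((i + 1) mod length vs)} \<in> E)"

definition is_tree :: "'v set \<Rightarrow> 'v set set \<Rightarrow> bool" where
  "is_tree V E \<longleftrightarrow> simple_graph V E \<and> V \<noteq> {} \<and>
     (\<forall>u\<in>V. \<forall>v\<in>V. reach E u v) \<and> (\<nexists>vs. is_cycle E vs)"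

text \<open>Phylogenetic tree with leaf set X: leaves (vertices of degree at most 1) are exactly X
  (labelling = identity), internal vertices have degree at least 3.\<close>
definition phylo_tree :: "'v set \<Rightarrow> 'v set set \<Rightarrow> 'v set \<Rightarrow> bool" where
  "phylo_tree V E X \<longleftrightarrow> is_tree V E \<and> X = {v\<in>V. degree E v \<le> 1} \<and>
     (\<forall>v\<in>V - X. degree E v \<ge> 3)"

definition flip_prob :: "('v set \<Rightarrow> real) \<Rightarrow> 'v set \<Rightarrow> real" where
  "flip_prob w e = (1 - exp (-2 * w e)) / 2"

definition states :: "'v set \<Rightarrow> ('v \<Rightarrow> bool) set" where
  "states V = {\<sigma>. \<forall>v. v \<notin> V \<longrightarrow> \<sigma> v = False}"

text \<open>Probability of a state assignment: uniform root state (1/2) times independent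
  symmetric transitions along every edge (independent of the choice of root).\<close>
definition state_prob :: "'v set set \<Rightarrow> ('v set \<Rightarrow> real) \<Rightarrow> ('v \<Rightarrow> bool) \<Rightarrow> real" where
  "state_prob E w \<sigma> = (1/2) * (\<Prod>e\<in>E.
      if (\<exists>u\<in>e. \<exists>v\<in>e. \<sigma> u \<noteq> \<sigma> v) then flip_prob w e else 1 - flip_prob w e)"

definition split_prob :: "'v set \<Rightarrow> 'v set set \<Rightarrow> ('v set \<Rightarrow> real) \<Rightarrow> 'v set \<Rightarrow> real" where
  "split_prob V E w A = (\<Sum>\<sigma>\<in>{\<sigma>\<in>states V. \<exists>a\<in>A. \<exists>b\<in>A. \<sigma> a \<noteq> \<sigma> b}. state_prob E w \<sigma>)"

definition span_edges :: "'v set set \<Rightarrow> 'v set \<Rightarrow> 'v set set" where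
  "span_edges E A = \<Inter>{F. F \<subseteq> E \<and> (\<forall>a\<in>A. \<forall>b\<in>A. reach F a b)}"

definition tree_length :: "'v set set \<Rightarrow> ('v set \<Rightarrow> real) \<Rightarrow> 'v set \<Rightarrow> real" where
  "tree_length E w A = (\<Sum>e\<in>span_edges E A. w e)"

definition even_subsets :: "'v set \<Rightarrow> 'v set set" where
  "even_subsets X = {A. A \<subseteq> X \<and> A \<noteq> {} \<and> even (card A)}"

definition Gmat :: "'v set \<Rightarrow> 'v set \<Rightarrow> real" where
  "Gmat A B = (if B \<subseteq> A then 2 powr (1 - real (card A)) else 0)"

definition Ginv :: "'v set \<Rightarrow> 'v set \<Rightarrow> real" where
  "Ginv A B = (if B \<subseteq> A then 2 ^ (card B - 1) * euler_num (card A - card B) else 0)"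

end

theory Submission
  imports Defs
begin

lemma sum_pow_card:
  assumes "finite M"
  shows "(\<Sum>D\<in>Pow M. g (card D)) = (\<Sum>j\<le>card M. real (card M choose j) * g j)"
proof -
  have "(\<Sum>D\<in>Pow M. g (card D)) = (\<Sum>j\<le>card M. sum (\<lambda>D. g (card D)) {D. D \<in> Pow M \<and> card D = j})"
    by (rule sum.group[symmetric]) (use assms in \<open>auto intro: card_mono\<close>)
  also have "\<dots> = (\<Sum>j\<le>card M. real (card M choose j) * g j)"
  proof (rule sum.cong[OF refl])
    fix j
    have "sum (\<lambda>D. g (card D)) {D. D \<in> Pow M \<and> card D = j} = sum (\<lambda>D. g j) {D. D \<subseteq> M \<and> card D = j}"
      by (rule sum.cong) auto
    also have "\<dots> = real (card M choose j) * g j" using n_subsets[OF assms, of j] by simp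
    finally show "sum (\<lambda>D. g (card D)) {D. D \<in> Pow M \<and> card D = j} = real (card M choose j) * g j" .
  qed
  finally show ?thesis .
qed

lemma sum_interval_up:
  assumes "finite A" "C \<subseteq> A"
  shows "(\<Sum>B | C \<subseteq> B \<and> B \<subseteq> A. h B) = (\<Sum>D\<in>Pow (A - C). h (C \<union> D))"
  by (rule sum.reindex_bij_witness[where i="\<lambda>D. C \<union> D" and j="\<lambda>B. B - C"]) (use assms in \<open>auto simp: Un_absorb1 Diff_Diff_Int Int_absorb1 Int_absorb2\<close>)

lemma sum_interval_down:
  assumes "finite A" "C \<subseteq> A"
  shows "(\<Sum>B | C \<subseteq> B \<and> B \<subseteq> A. h B) = (\<Sum>D\<in>Pow (A - C). h (A - D))"
  by (rule sum.reindex_bij_witness[where i="\<lambda>D. A - D" and j="\<lambda>B. A - B"]) (use assms in \<open>auto simp: Un_absorb1 Diff_Diff_Int Int_absorb1 Int_absorb2\<close>)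

lemma sum_ES_restrict:
  assumes "finite X" "A \<in> even_subsets X" "C \<in> even_subsets X"
  shows "(\<Sum>B\<in>even_subsets X. if C \<subseteq> B \<and> B \<subseteq> A then f B else 0)
       = (\<Sum>B | C \<subseteq> B \<and> B \<subseteq> A. if even (card B) then f B else 0)"
proof -
  have fin: "finite (even_subsets X)" using assms(1) unfolding even_subsets_def
    by (rule rev_finite_subset[OF finite_Pow_iff[THEN iffD2]]) auto
  have finA: "finite A" using assms by (auto simp: even_subsets_def intro: finite_subset)
  have fin2: "finite {B. C \<subseteq> B \<and> B \<subseteq> A}"
    by (rule rev_finite_subset[OF finite_Pow_iff[THEN iffD2, OF finA]]) auto
  have "(\<Sum>B\<in>even_subsets X. if C \<subseteq> B \<and> B \<subseteq> A then f B else 0)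
      = (\<Sum>B\<in>even_subsets X \<inter> {B. C \<subseteq> B \<and> B \<subseteq> A}. f B)"
    using sum.inter_restrict[OF fin, of f "{B. C \<subseteq> B \<and> B \<subseteq> A}"] by simp
  also have "even_subsets X \<inter> {B. C \<subseteq> B \<and> B \<subseteq> A} = {B. C \<subseteq> B \<and> B \<subseteq> A} \<inter> {B. even (card B)}"
    using assms by (auto simp: even_subsets_def)
  also have "(\<Sum>B\<in>\<dots>. f B) = (\<Sum>B | C \<subseteq> B \<and> B \<subseteq> A. if even (card B) then f B else 0)"
    using sum.inter_restrict[OF fin2, of f "{B. even (card B)}"] by simp
  finally show ?thesis .
qed

lemma euler_rec:
  "(\<Sum>i\<le>n. if even (n - i) then real (n choose i) * euler_num i else 0) = (if n = 0 then 1 else 0)"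
proof -
  define D :: "real fps" where "D = fps_exp 1 + fps_exp (-1)"
  define S :: "real fps" where "S = fps_const 2 * inverse D"
  have D0: "fps_nth D 0 \<noteq> 0" by (simp add: D_def)
  have SD: "S * D = fps_const 2"
    unfolding S_def using inverse_mult_eq_1[OF D0] by (simp add: mult.assoc)
  have Dn: "fps_nth D m = (if even m then 2 / fact m else 0)" for m
    by (auto simp: D_def)
  have E: "euler_num i = fact i * fps_nth S i" for i
    by (simp add: euler_num_def S_def D_def)
  have "fps_nth (S * D) n = (\<Sum>i=0..n. fps_nth S i * fps_nth D (n - i))" by (rule fps_mult_nth)
  hence "(if n = 0 then 2 else 0) = (\<Sum>i\<le>n. fps_nth S i * fps_nth D (n - i))"
    by (simp add: SD atLeast0AtMost)
  hence "fact n * (if n = 0 then 2 else 0) = (\<Sum>i\<le>n. fact n * (fps_nth S i * fps_nth D (n - i)))"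
    by (simp add: sum_distrib_left)
  also have "\<dots> = (\<Sum>i\<le>n. 2 * (if even (n - i) then real (n choose i) * euler_num i else 0))"
  proof (rule sum.cong[OF refl])
    fix i assume "i \<in> {..n}"
    hence "i \<le> n" by simp
    thus "fact n * (fps_nth S i * fps_nth D (n - i)) = 2 * (if even (n - i) then real (n choose i) * euler_num i else 0)"
      by (simp add: Dn E binomial_fact field_simps)
  qed
  finally show ?thesis by (simp add: sum_distrib_left[symmetric] split: if_splits)
qed


lemma pow_lemma: "n \<ge> 1 \<Longrightarrow> 2 powr (1 - real n) * 2 ^ (n - 1) = (1::real)"
proof -
  assume "n \<ge> 1"
  hence e: "1 - real n = - real (n - 1)" by (simp add: of_nat_diff)
  have "2 powr (1 - real n) = inverse (2 powr real (n - 1))" unfolding e by (rule powr_minus)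
  also have "2 powr real (n - 1) = (2::real) ^ (n - 1)" by (rule powr_realpow) simp
  finally show ?thesis by simp
qed

lemma eul_even:
  assumes "even m"
  shows "(\<Sum>j\<le>m. real (m choose j) * (if even j then euler_num j else 0)) = (if m = 0 then 1 else 0)"
proof -
  have "(\<Sum>j\<le>m. real (m choose j) * (if even j then euler_num j else 0))
      = (\<Sum>j\<le>m. if even (m - j) then real (m choose j) * euler_num j else 0)"
  proof (rule sum.cong[OF refl])
    fix j assume "j \<in> {..m}"
    hence "even j \<longleftrightarrow> even (m - j)" using assms by (auto simp: even_diff_nat)
    thus "real (m choose j) * (if even j then euler_num j else 0) = (if even (m - j) then real (m choose j) * euler_num j else 0)"
      by simp
  qed
  thus ?thesis using euler_rec by simp
qed

lemma ES_facts:
  assumes "finite X" "A \<in> even_subsets X"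
  shows "finite A" "A \<subseteq> X" "A \<noteq> {}" "even (card A)" "card A \<ge> 1"
proof -
  show fA: "finite A" "A \<subseteq> X" "A \<noteq> {}" "even (card A)"
    using assms by (auto simp: even_subsets_def intro: finite_subset)
  thus "card A \<ge> 1" by (simp add: Suc_leI card_gt_0_iff)
qed

lemma part1:
  assumes "finite X" "A \<in> even_subsets X" "C \<in> even_subsets X"
  shows "(\<Sum>B\<in>even_subsets X. Gmat A B * Ginv B C) = (if A = C then 1 else 0)"
proof -
  note fa = ES_facts[OF assms(1,2)] and fc = ES_facts[OF assms(1,3)]
  define K where "K = 2 powr (1 - real (card A)) * 2 ^ (card C - 1)"
  have "(\<Sum>B\<in>even_subsets X. Gmat A B * Ginv B C)
      = (\<Sum>B\<in>even_subsets X. if C \<subseteq> B \<and> B \<subseteq> A then K * euler_num (card B - card C) else 0)"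
    by (rule sum.cong) (auto simp: Gmat_def Ginv_def K_def)
  also have "\<dots> = (\<Sum>B | C \<subseteq> B \<and> B \<subseteq> A. if even (card B) then K * euler_num (card B - card C) else 0)"
    by (rule sum_ES_restrict[OF assms])
  finally have eq: "(\<Sum>B\<in>even_subsets X. Gmat A B * Ginv B C) = \<dots>" .
  show ?thesis
  proof (cases "C \<subseteq> A")
    case False
    hence "{B. C \<subseteq> B \<and> B \<subseteq> A} = {}" by auto
    with eq False show ?thesis by auto
  next
    case True
    have finAC: "finite (A - C)" using fa by auto
    have cAC: "card (A - C) = card A - card C" using True fa by (simp add: card_Diff_subset finite_subset)
    have evm: "even (card (A - C))" using cAC fa fc True by (simp add: card_mono)
    have "(\<Sum>B | C \<subseteq> B \<and> B \<subseteq> A. if even (card B) then K * euler_num (card B - card C) else 0)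
      = (\<Sum>D\<in>Pow (A - C). if even (card (C \<union> D)) then K * euler_num (card (C \<union> D) - card C) else 0)"
      by (rule sum_interval_up[OF fa(1) True])
    also have "\<dots> = (\<Sum>D\<in>Pow (A - C). K * (if even (card D) then euler_num (card D) else 0))"
    proof (rule sum.cong[OF refl])
      fix D assume "D \<in> Pow (A - C)"
      hence "card (C \<union> D) = card C + card D" using fa fc
        by (subst card_Un_disjoint) (auto intro: finite_subset)
      thus "(if even (card (C \<union> D)) then K * euler_num (card (C \<union> D) - card C) else 0)
          = K * (if even (card D) then euler_num (card D) else 0)" using fc by auto
    qed
    also have "\<dots> = K * (\<Sum>j\<le>card (A - C). real (card (A - C) choose j) * (if even j then euler_num j else 0))"
      by (subst sum_distrib_left[symmetric]) (rule arg_cong[where f="\<lambda>x. K * x"], rule sum_pow_card[OF finAC, where g="\<lambda>n. if even n then euler_num n else 0"])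
    also have "\<dots> = K * (if card (A - C) = 0 then 1 else 0)" by (simp add: eul_even[OF evm])
    also have "\<dots> = (if A = C then 1 else 0)"
    proof (cases "A = C")
      case True thus ?thesis using pow_lemma[OF fa(5)] by (simp add: K_def)
    next
      case False
      hence "card (A - C) \<noteq> 0" using \<open>C \<subseteq> A\<close> fa by auto
      thus ?thesis using False by simp
    qed
    finally show ?thesis using eq by simp
  qed
qed

lemma part2:
  assumes "finite X" "A \<in> even_subsets X" "C \<in> even_subsets X"
  shows "(\<Sum>B\<in>even_subsets X. Ginv A B * Gmat B C) = (if A = C then 1 else 0)"
proof -
  note fa = ES_facts[OF assms(1,2)] and fc = ES_facts[OF assms(1,3)]
  have "(\<Sum>B\<in>even_subsets X. Ginv A B * Gmat B C)
      = (\<Sum>B\<in>even_subsets X. if C \<subseteq> B \<and> B \<subseteq> A then euler_num (card A - card B) else 0)"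
  proof (rule sum.cong[OF refl])
    fix B assume B: "B \<in> even_subsets X"
    have "2 powr (1 - real (card B)) * 2 ^ (card B - 1) = (1::real)"
      using pow_lemma[OF ES_facts(5)[OF assms(1) B]] .
    thus "Ginv A B * Gmat B C = (if C \<subseteq> B \<and> B \<subseteq> A then euler_num (card A - card B) else 0)"
      by (auto simp: Gmat_def Ginv_def algebra_simps)
  qed
  also have "\<dots> = (\<Sum>B | C \<subseteq> B \<and> B \<subseteq> A. if even (card B) then euler_num (card A - card B) else 0)"
    by (rule sum_ES_restrict[OF assms])
  finally have eq: "(\<Sum>B\<in>even_subsets X. Ginv A B * Gmat B C) = \<dots>" .
  show ?thesis
  proof (cases "C \<subseteq> A")
    case False
    hence "{B. C \<subseteq> B \<and> B \<subseteq> A} = {}" by auto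
    with eq False show ?thesis by auto
  next
    case True
    have finAC: "finite (A - C)" using fa by auto
    have cAC: "card (A - C) = card A - card C" using True fa by (simp add: card_Diff_subset finite_subset)
    have evm: "even (card (A - C))" using cAC fa fc True by (simp add: card_mono)
    have "(\<Sum>B | C \<subseteq> B \<and> B \<subseteq> A. if even (card B) then euler_num (card A - card B) else 0)
      = (\<Sum>D\<in>Pow (A - C). if even (card (A - D)) then euler_num (card A - card (A - D)) else 0)"
      by (rule sum_interval_down[OF fa(1) True])
    also have "\<dots> = (\<Sum>D\<in>Pow (A - C). (if even (card D) then euler_num (card D) else 0))"
    proof (rule sum.cong[OF refl])
      fix D assume "D \<in> Pow (A - C)"
      hence D: "D \<subseteq> A" by auto
      hence "card (A - D) = card A - card D" using fa by (simp add: card_Diff_subset finite_subset)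
      moreover have "card D \<le> card A" using D fa by (simp add: card_mono)
      ultimately show "(if even (card (A - D)) then euler_num (card A - card (A - D)) else 0)
          = (if even (card D) then euler_num (card D) else 0)" using fa by (auto simp: even_diff_nat)
    qed
    also have "\<dots> = (\<Sum>j\<le>card (A - C). real (card (A - C) choose j) * (if even j then euler_num j else 0))"
      by (rule sum_pow_card[OF finAC, where g="\<lambda>n. if even n then euler_num n else 0"])
    also have "\<dots> = (if card (A - C) = 0 then 1 else 0)" by (simp add: eul_even[OF evm])
    also have "\<dots> = (if A = C then 1 else 0)"
      using \<open>C \<subseteq> A\<close> fa by auto
    finally show ?thesis using eq by simp
  qed
qed

lemma reach_refl[simp]: "reach F u u"
  by (simp add: reach_def)

lemma reach_step: "reach F u x \<Longrightarrow> {x, y} \<in> F \<Longrightarrow> reach F u y"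
  unfolding reach_def by (rule rtrancl_into_rtrancl) auto

lemma reach_edge: "{x, y} \<in> F \<Longrightarrow> reach F x y"
  using reach_step[of F x x y] by simp

lemma reach_trans: "reach F u v \<Longrightarrow> reach F v x \<Longrightarrow> reach F u x"
  unfolding reach_def by (rule rtrancl_trans)

lemma reach_sym: "reach F u v \<Longrightarrow> reach F v u"
proof -
  assume "reach F u v"
  hence "(u, v) \<in> {(x, y). {x, y} \<in> F}\<^sup>*" by (simp add: reach_def)
  thus "reach F v u"
  proof (induction rule: rtrancl_induct)
    case base thus ?case by simp
  next
    case (step y z)
    hence "{z, y} \<in> F" by (simp add: insert_commute)
    hence "reach F z y" by (rule reach_edge)
    thus ?case using step.IH by (rule reach_trans)
  qed
qed

lemma reach_mono: "reach F u v \<Longrightarrow> F \<subseteq> G \<Longrightarrow> reach G u v"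
  unfolding reach_def by (erule rtrancl_mono[THEN subsetD, rotated]) auto

lemma reach_path:
  assumes "reach F u v"
  shows "\<exists>vs. vs \<noteq> [] \<and> hd vs = u \<and> last vs = v \<and> distinct vs \<and>
           (\<forall>i. Suc i < length vs \<longrightarrow> {vs ! i, vs ! Suc i} \<in> F)"
proof -
  from assms have "(u, v) \<in> {(x, y). {x, y} \<in> F}\<^sup>*" by (simp add: reach_def)
  thus ?thesis
  proof (induction rule: rtrancl_induct)
    case base
    show ?case by (rule exI[of _ "[u]"]) simp
  next
    case (step y z)
    then obtain vs where vs: "vs \<noteq> []" "hd vs = u" "last vs = y" "distinct vs"
      "\<forall>i. Suc i < length vs \<longrightarrow> {vs ! i, vs ! Suc i} \<in> F" by blast
    have yz: "{y, z} \<in> F" using step by simp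
    show ?case
    proof (cases "z \<in> set vs")
      case True
      then obtain i where i: "i < length vs" "vs ! i = z" by (auto simp: in_set_conv_nth)
      define ws where "ws = take (Suc i) vs"
      have ws: "ws = take i vs @ [vs ! i]" unfolding ws_def by (rule take_Suc_conv_app_nth[OF i(1)])
      show ?thesis
      proof (rule exI[of _ ws], intro conjI allI impI)
        show "ws \<noteq> []" using ws by simp
        show "hd ws = u" using vs(1,2) unfolding ws_def by (cases vs) auto
        show "last ws = z" using ws i by simp
        show "distinct ws" unfolding ws_def using vs(4) by simp
        fix j assume "Suc j < length ws"
        hence "Suc j < length vs" "Suc j < Suc i" using i unfolding ws_def by auto
        thus "{ws ! j, ws ! Suc j} \<in> F" using vs(5) unfolding ws_def by simp
      qed
    next
      case False
      show ?thesis
      proof (rule exI[of _ "vs @ [z]"], intro conjI allI impI)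
        show "vs @ [z] \<noteq> []" by simp
        show "hd (vs @ [z]) = u" using vs by simp
        show "last (vs @ [z]) = z" by simp
        show "distinct (vs @ [z])" using vs False by simp
        fix j assume j: "Suc j < length (vs @ [z])"
        show "{(vs @ [z]) ! j, (vs @ [z]) ! Suc j} \<in> F"
        proof (cases "Suc j < length vs")
          case True thus ?thesis using vs(5) by (simp add: nth_append)
        next
          case False
          hence "Suc j = length vs" using j by simp
          hence "j = length vs - 1" by simp
          hence "vs ! j = y" using vs(1,3) by (simp add: last_conv_nth)
          thus ?thesis using \<open>Suc j = length vs\<close> yz by (simp add: nth_append)
        qed
      qed
    qed
  qed
qed

context
  fixes V :: "'v set" and E :: "'v set set"
  assumes T: "is_tree V E"
begin

lemma finV: "finite V" using T by (simp add: is_tree_def simple_graph_def)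

lemma edge_split: "e \<in> E \<Longrightarrow> \<exists>u v. e = {u, v} \<and> u \<noteq> v \<and> u \<in> V \<and> v \<in> V"
proof -
  assume e: "e \<in> E"
  hence "e \<subseteq> V" "card e = 2" using T unfolding is_tree_def simple_graph_def by blast+
  thus ?thesis by (auto simp: card_2_iff)
qed

lemma finE: "finite E"
proof -
  have "E \<subseteq> Pow V" using T unfolding is_tree_def simple_graph_def by blast
  thus ?thesis by (rule finite_subset) (simp add: finV)
qed

lemma conn: "u \<in> V \<Longrightarrow> v \<in> V \<Longrightarrow> reach E u v"
  using T unfolding is_tree_def by blast

lemma no_reach:
  assumes e: "e \<in> E" "e = {u, v}" "u \<noteq> v"
  shows "\<not> reach (E - {e}) u v"
proof
  assume r: "reach (E - {e}) u v"
  obtain vs where vs: "vs \<noteq> []" "hd vs = u" "last vs = v" "distinct vs"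
      "\<forall>i. Suc i < length vs \<longrightarrow> {vs ! i, vs ! Suc i} \<in> E - {e}"
    using reach_path[OF r] by (elim exE conjE) blast
  have l2: "length vs \<ge> 2"
  proof (rule ccontr)
    assume "\<not> length vs \<ge> 2"
    moreover have "length vs \<noteq> 0" using vs(1) by simp
    ultimately have "length vs = 1" by linarith
    hence "hd vs = last vs" using vs(1) by (cases vs) auto
    thus False using vs e by simp
  qed
  have l3: "length vs \<ge> 3"
  proof (rule ccontr)
    assume "\<not> length vs \<ge> 3"
    hence L: "length vs = 2" using l2 by simp
    hence "vs ! 0 = u" "vs ! 1 = v" using vs(1,2,3) by (auto simp: hd_conv_nth last_conv_nth)
    moreover have "Suc 0 < length vs" using L by simp
    moreover have "{vs ! 0, vs ! Suc 0} \<in> E - {e}" using vs(5) \<open>Suc 0 < length vs\<close> by blast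
    ultimately have "{u, v} \<in> E - {e}" by simp
    thus False using e by simp
  qed
  have "is_cycle E vs"
    unfolding is_cycle_def
  proof (intro conjI allI impI)
    show "3 \<le> length vs" by fact
    show "distinct vs" by fact
    fix i assume i: "i < length vs"
    show "{vs ! i, vs ! ((i + 1) mod length vs)} \<in> E"
    proof (cases "Suc i < length vs")
      case True thus ?thesis using vs(5) by auto
    next
      case False
      hence "Suc i = length vs" using i by simp
      hence "(i + 1) mod length vs = 0" by simp
      moreover have "i = length vs - 1" using \<open>Suc i = length vs\<close> by simp
      hence "vs ! i = v" using vs(1,3) by (simp add: last_conv_nth)
      moreover have "vs ! 0 = u" using vs(1,2) by (simp add: hd_conv_nth)
      ultimately show ?thesis using e by (simp add: insert_commute)
    qed
  qed
  thus False using T unfolding is_tree_def by blast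
qed

lemma dich:
  assumes e: "e = {u, v}" and r: "reach E u x"
  shows "reach (E - {e}) u x \<or> reach (E - {e}) v x"
proof -
  from r have "(u, x) \<in> {(x, y). {x, y} \<in> E}\<^sup>*" by (simp add: reach_def)
  thus ?thesis
  proof (induction rule: rtrancl_induct)
    case base thus ?case by simp
  next
    case (step y z)
    hence yz: "{y, z} \<in> E" by simp
    show ?case
    proof (cases "{y, z} = e")
      case True
      hence "z = u \<or> z = v" using e by (auto simp: doubleton_eq_iff)
      thus ?thesis by auto
    next
      case False
      hence "{y, z} \<in> E - {e}" using yz by simp
      show ?thesis
      proof (cases "reach (E - {e}) u y")
        case True thus ?thesis using reach_step[OF _ \<open>{y, z} \<in> E - {e}\<close>] by simp
      next
        case False
        hence "reach (E - {e}) v y" using step.IH by simp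
        thus ?thesis using reach_step[OF _ \<open>{y, z} \<in> E - {e}\<close>] by simp
      qed
    qed
  qed
qed

end

definition below :: "'v set set \<Rightarrow> 'v \<Rightarrow> 'v set \<Rightarrow> 'v \<Rightarrow> bool" where
  "below E r e x \<longleftrightarrow> \<not> reach (E - {e}) r x"

definition flip :: "('v \<Rightarrow> bool) \<Rightarrow> 'v set \<Rightarrow> bool" where
  "flip \<sigma> e \<longleftrightarrow> (\<exists>u\<in>e. \<exists>v\<in>e. \<sigma> u \<noteq> \<sigma> v)"

definition construct :: "'v set \<Rightarrow> 'v set set \<Rightarrow> 'v \<Rightarrow> bool \<Rightarrow> 'v set set \<Rightarrow> 'v \<Rightarrow> bool" where
  "construct V E r b F = (\<lambda>x. x \<in> V \<and> (b \<noteq> odd (card {e\<in>F. below E r e x})))"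

lemma flip_pair: "flip \<sigma> {u, v} \<longleftrightarrow> \<sigma> u \<noteq> \<sigma> v"
  unfolding flip_def by auto

lemma parity_step:
  assumes "finite S" "finite T" "S - {f} = T - {f}" "\<not> (f \<in> S \<and> f \<in> T)"
  shows "odd (card T) \<longleftrightarrow> (odd (card S) \<noteq> (f \<in> S \<or> f \<in> T))"
proof (cases "f \<in> S")
  case True
  hence fT: "f \<notin> T" using assms by auto
  hence "T = S - {f}" using assms(3) by auto
  moreover have "card S > 0" using True assms(1) card_gt_0_iff by blast
  ultimately have "card T = card S - 1" "card S \<ge> 1" using True assms(1) by auto
  thus ?thesis using True by auto
next
  case False
  show ?thesis
  proof (cases "f \<in> T")
    case True
    hence "S = T - {f}" using assms(3) False by auto
    moreover have "card T > 0" using True assms(2) card_gt_0_iff by blast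
    ultimately have "card S = card T - 1" "card T \<ge> 1" using True assms(2) by auto
    thus ?thesis using True by auto
  next
    case False
    hence "S = T" using assms(3) \<open>f \<notin> S\<close> by auto
    thus ?thesis using False by auto
  qed
qed

context
  fixes V :: "'v set" and E :: "'v set set" and r :: 'v
  assumes T: "is_tree V E" and r: "r \<in> V"
begin

lemma below_adj:
  assumes "f \<in> E" "f \<noteq> e" "f = {y, z}"
  shows "below E r e y \<longleftrightarrow> below E r e z"
proof -
  have e1: "{y, z} \<in> E - {e}" using assms by auto
  have e2: "{z, y} \<in> E - {e}" using assms by (auto simp: insert_commute)
  have "reach (E - {e}) r y \<longleftrightarrow> reach (E - {e}) r z"
  proof
    assume "reach (E - {e}) r y" thus "reach (E - {e}) r z" using e1 by (rule reach_step)
  next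
    assume "reach (E - {e}) r z" thus "reach (E - {e}) r y" using e2 by (rule reach_step)
  qed
  thus ?thesis unfolding below_def by simp
qed

lemma below_edge:
  assumes "e \<in> E" "e = {y, z}" "y \<noteq> z"
  shows "below E r e y \<noteq> below E r e z"
proof -
  obtain u v where uv: "e = {u, v}" "u \<in> V" "v \<in> V" using edge_split[OF T assms(1)] by blast
  have "y \<in> V" "z \<in> V" using uv assms by (auto simp: doubleton_eq_iff)
  hence "reach E y r" using conn[OF T] r by simp
  hence "reach (E - {e}) y r \<or> reach (E - {e}) z r" using dich[OF T assms(2)] by simp
  moreover have nyz: "\<not> reach (E - {e}) y z" using no_reach[OF T assms] .
  moreover have "\<not> reach (E - {e}) z y" using nyz reach_sym by metis
  ultimately show ?thesis
  proof (elim disjE)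
    assume yr: "reach (E - {e}) y r"
    have ry: "reach (E - {e}) r y" using yr by (rule reach_sym)
    have "\<not> reach (E - {e}) r z"
    proof
      assume "reach (E - {e}) r z"
      hence "reach (E - {e}) y z" using yr by (rule reach_trans[rotated])
      thus False using nyz by simp
    qed
    thus ?thesis using ry by (simp add: below_def)
  next
    assume zr: "reach (E - {e}) z r"
    have rz: "reach (E - {e}) r z" using zr by (rule reach_sym)
    have "\<not> reach (E - {e}) r y"
    proof
      assume "reach (E - {e}) r y"
      hence "reach (E - {e}) z y" using zr by (rule reach_trans[rotated])
      thus False using \<open>\<not> reach (E - {e}) z y\<close> by simp
    qed
    thus ?thesis using rz by (simp add: below_def)
  qed
qed

lemma same_side:
  assumes e: "e \<in> E" and x: "x \<in> V" and y: "y \<in> V"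
  shows "reach (E - {e}) x y \<longleftrightarrow> (below E r e x \<longleftrightarrow> below E r e y)"
proof -
  obtain u v where uv: "e = {u, v}" "u \<noteq> v" "u \<in> V" "v \<in> V" using edge_split[OF T e] by blast
  have key: "\<exists>a b. e = {a, b} \<and> a \<noteq> b \<and> a \<in> V \<and> b \<in> V \<and> \<not> below E r e a \<and> below E r e b"
  proof (cases "below E r e u")
    case True
    hence "\<not> below E r e v" using below_edge[OF e uv(1,2)] by simp
    moreover have "e = {v, u}" using uv(1) by (simp add: insert_commute)
    ultimately show ?thesis using True uv(2,3,4) by blast
  next
    case False
    hence "below E r e v" using below_edge[OF e uv(1,2)] by simp
    thus ?thesis using False uv by blast
  qed
  then obtain a b where ab: "e = {a, b}" "a \<noteq> b" "a \<in> V" "b \<in> V" "\<not> below E r e a" "below E r e b"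
    by blast
  have ra: "reach (E - {e}) r a" using ab(5) by (simp add: below_def)
  have side: "below E r e t \<Longrightarrow> reach (E - {e}) b t" if "t \<in> V" for t
  proof -
    assume bt: "below E r e t"
    have "reach E a t" using conn[OF T ab(3) that] .
    hence "reach (E - {e}) a t \<or> reach (E - {e}) b t" using dich[OF T ab(1)] by simp
    moreover have "\<not> reach (E - {e}) a t"
    proof
      assume "reach (E - {e}) a t"
      hence "reach (E - {e}) r t" using ra by (rule reach_trans[rotated])
      thus False using bt by (simp add: below_def)
    qed
    ultimately show ?thesis by simp
  qed
  show ?thesis
  proof
    assume xy: "reach (E - {e}) x y"
    have yx: "reach (E - {e}) y x" using xy by (rule reach_sym)
    have "reach (E - {e}) r x \<Longrightarrow> reach (E - {e}) r y" using reach_trans[OF _ xy] by simp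
    moreover have "reach (E - {e}) r y \<Longrightarrow> reach (E - {e}) r x" using reach_trans[OF _ yx] by simp
    ultimately show "below E r e x \<longleftrightarrow> below E r e y"
      unfolding below_def by blast
  next
    assume eq: "below E r e x \<longleftrightarrow> below E r e y"
    show "reach (E - {e}) x y"
    proof (cases "below E r e x")
      case True
      hence bx: "reach (E - {e}) b x" and bY: "reach (E - {e}) b y" using side x y eq by auto
      show ?thesis by (rule reach_trans[OF reach_sym[OF bx] bY])
    next
      case False
      hence rx: "reach (E - {e}) r x" and ry: "reach (E - {e}) r y" using eq by (auto simp: below_def)
      show ?thesis by (rule reach_trans[OF reach_sym[OF rx] ry])
    qed
  qed
qed

lemma construct_states: "construct V E r b F \<in> states V"
  by (simp add: construct_def states_def)

lemma construct_root: "construct V E r b F r = b"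
  using r by (simp add: construct_def below_def)

lemma flip_construct:
  assumes F: "F \<subseteq> E" and e: "e \<in> E"
  shows "flip (construct V E r b F) e \<longleftrightarrow> e \<in> F"
proof -
  obtain u v where uv: "e = {u, v}" "u \<noteq> v" "u \<in> V" "v \<in> V" using edge_split[OF T e] by blast
  define Su where "Su = {e'\<in>F. below E r e' u}"
  define Sv where "Sv = {e'\<in>F. below E r e' v}"
  have fin: "finite Su" "finite Sv" using finE[OF T] F unfolding Su_def Sv_def
    by (auto intro: finite_subset)
  have adj: "below E r e' u \<longleftrightarrow> below E r e' v" if "e' \<noteq> e" for e'
    using below_adj[OF e _ uv(1), of e'] that by simp
  have "Su - {e} = Sv - {e}"
    unfolding Su_def Sv_def using adj by auto
  moreover have "\<not> (e \<in> Su \<and> e \<in> Sv)" using below_edge[OF e uv(1,2)] unfolding Su_def Sv_def by auto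
  ultimately have par0: "odd (card Sv) \<longleftrightarrow> (odd (card Su) \<noteq> (e \<in> Su \<or> e \<in> Sv))"
    by (rule parity_step[OF fin])
  have "(e \<in> Su \<or> e \<in> Sv) \<longleftrightarrow> e \<in> F"
    using below_edge[OF e uv(1,2)] unfolding Su_def Sv_def by auto
  hence par: "odd (card Sv) \<longleftrightarrow> (odd (card Su) \<noteq> (e \<in> F))" using par0 by simp
  have "flip (construct V E r b F) e \<longleftrightarrow> construct V E r b F u \<noteq> construct V E r b F v"
    using uv(1) flip_pair by simp
  also have "\<dots> \<longleftrightarrow> e \<in> F" using uv par unfolding construct_def Su_def Sv_def by auto
  finally show ?thesis .
qed

lemma flip_construct_set:
  assumes F: "F \<subseteq> E"
  shows "{e\<in>E. flip (construct V E r b F) e} = F"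
  using flip_construct[OF F] F by auto

lemma construct_inv:
  assumes \<sigma>: "\<sigma> \<in> states V"
  shows "construct V E r (\<sigma> r) {e\<in>E. flip \<sigma> e} = \<sigma>"
proof
  fix x
  show "construct V E r (\<sigma> r) {e\<in>E. flip \<sigma> e} x = \<sigma> x"
  proof (cases "x \<in> V")
    case False thus ?thesis using \<sigma> by (simp add: construct_def states_def)
  next
    case True
    define S where "S = (\<lambda>x. {e\<in>{e\<in>E. flip \<sigma> e}. below E r e x})"
    have finS: "finite (S x)" for x using finE[OF T] unfolding S_def by auto
    have "reach E r x" using conn[OF T r True] .
    hence "(r, x) \<in> {(x, y). {x, y} \<in> E}\<^sup>*" by (simp add: reach_def)
    hence "\<sigma> x = (\<sigma> r \<noteq> odd (card (S x)))"
    proof (induction rule: rtrancl_induct)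
      case base
      have "S r = {}" unfolding S_def below_def by simp
      thus ?case by simp
    next
      case (step y z)
      hence f: "{y, z} \<in> E" by simp
      obtain u v where uv: "{y, z} = {u, v}" "u \<noteq> v" using edge_split[OF T f] by blast
      hence yz: "y \<noteq> z" by auto
      have adj: "below E r e' y \<longleftrightarrow> below E r e' z" if "e' \<noteq> {y, z}" for e'
        using below_adj[OF f _ refl, of e'] that by simp
      have "S y - {{y, z}} = S z - {{y, z}}"
        unfolding S_def using adj by auto
      moreover have "\<not> ({y, z} \<in> S y \<and> {y, z} \<in> S z)"
        using below_edge[OF f refl yz] unfolding S_def by auto
      ultimately have par: "odd (card (S z)) \<longleftrightarrow> (odd (card (S y)) \<noteq> ({y, z} \<in> S y \<or> {y, z} \<in> S z))"
        by (rule parity_step[OF finS finS])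
      have "({y, z} \<in> S y \<or> {y, z} \<in> S z) \<longleftrightarrow> flip \<sigma> {y, z}"
        using below_edge[OF f refl yz] f unfolding S_def by auto
      hence "odd (card (S z)) \<longleftrightarrow> (odd (card (S y)) \<noteq> flip \<sigma> {y, z})"
        using par by simp
      thus ?case using step.IH flip_pair[of \<sigma> y z] by auto
    qed
    thus ?thesis using True unfolding construct_def S_def by simp
  qed
qed

lemma sum_states:
  "(\<Sum>\<sigma>\<in>states V. g \<sigma>) = (\<Sum>b\<in>UNIV. \<Sum>F\<in>Pow E. g (construct V E r b F))"
proof -
  have "(\<Sum>\<sigma>\<in>states V. g \<sigma>) = (\<Sum>p\<in>UNIV \<times> Pow E. g (construct V E r (fst p) (snd p)))"
    by (rule sum.reindex_bij_witness[where j="\<lambda>\<sigma>. (\<sigma> r, {e\<in>E. flip \<sigma> e})"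
        and i="\<lambda>p. construct V E r (fst p) (snd p)"])
       (simp_all add: construct_inv construct_root construct_states flip_construct_set
          prod_eq_iff mem_Times_iff)
  also have "\<dots> = (\<Sum>b\<in>UNIV. \<Sum>F\<in>Pow E. g (construct V E r b F))"
    by (simp add: sum.cartesian_product split_beta)
  finally show ?thesis .
qed

end

definition sgnb :: "bool \<Rightarrow> real" where "sgnb b = (if b then -1 else 1)"

lemma prod_sign_card:
  assumes "finite A"
  shows "(\<Prod>x\<in>A. if P x then -1 else (1::real)) = (-1) ^ card {x\<in>A. P x}"
proof -
  have "(\<Prod>x\<in>A. if P x then -1 else (1::real)) = (\<Prod>x\<in>{x\<in>A. P x}. -1)"
    using prod.inter_filter[OF assms, of "\<lambda>_. -1::real" P] by simp
  thus ?thesis by simp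
qed

lemma sgnb_xor: "sgnb (b \<noteq> c) = sgnb b * sgnb c"
  by (auto simp: sgnb_def)

lemma sgnb_odd: "sgnb (odd n) = (-1) ^ n"
  by (simp add: sgnb_def)

lemma sgnb_even_pow: "even n \<Longrightarrow> sgnb b ^ n = 1"
  by (auto simp: sgnb_def)

context
  fixes V :: "'v set" and E :: "'v set set" and r :: 'v
  assumes T: "is_tree V E" and r: "r \<in> V"
begin

lemma state_prob_construct:
  assumes F: "F \<subseteq> E"
  shows "state_prob E w (construct V E r b F) = 1/2 * (\<Prod>e\<in>E. if e \<in> F then flip_prob w e else 1 - flip_prob w e)"
  unfolding state_prob_def
proof (rule arg_cong[where f="\<lambda>x. 1/2 * x"], rule prod.cong[OF refl])
  fix e assume e: "e \<in> E"
  have "(\<exists>u\<in>e. \<exists>v\<in>e. construct V E r b F u \<noteq> construct V E r b F v) \<longleftrightarrow> e \<in> F"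
    using flip_construct[OF T r F e] unfolding flip_def .
  thus "(if \<exists>u\<in>e. \<exists>v\<in>e. construct V E r b F u \<noteq> construct V E r b F v then flip_prob w e else 1 - flip_prob w e)
      = (if e \<in> F then flip_prob w e else 1 - flip_prob w e)" by simp
qed

lemma sign_construct:
  assumes F: "F \<subseteq> E" and S: "S \<subseteq> V" "even (card S)"
  shows "(\<Prod>x\<in>S. sgnb (construct V E r b F x))
       = (\<Prod>e\<in>F. if odd (card {x\<in>S. below E r e x}) then -1 else 1)"
proof -
  have finS: "finite S" using finV[OF T] S(1) by (rule finite_subset[rotated])
  have finF: "finite F" using finE[OF T] F by (rule finite_subset[rotated])
  have "(\<Prod>x\<in>S. sgnb (construct V E r b F x))
      = (\<Prod>x\<in>S. sgnb b * (\<Prod>e\<in>F. if below E r e x then -1 else 1))"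
  proof (rule prod.cong[OF refl])
    fix x assume "x \<in> S"
    hence "x \<in> V" using S by auto
    hence "construct V E r b F x = (b \<noteq> odd (card {e\<in>F. below E r e x}))"
      by (simp add: construct_def)
    hence "sgnb (construct V E r b F x) = sgnb b * (-1) ^ card {e\<in>F. below E r e x}"
      by (simp only: sgnb_xor sgnb_odd)
    thus "sgnb (construct V E r b F x) = sgnb b * (\<Prod>e\<in>F. if below E r e x then -1 else 1)"
      by (simp add: prod_sign_card[OF finF])
  qed
  also have "\<dots> = sgnb b ^ card S * (\<Prod>x\<in>S. \<Prod>e\<in>F. if below E r e x then -1 else 1)"
    by (simp add: prod.distrib)
  also have "\<dots> = (\<Prod>e\<in>F. \<Prod>x\<in>S. if below E r e x then -1 else 1)"
    using sgnb_even_pow[OF S(2)] by (simp add: prod.swap[of _ S])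
  also have "\<dots> = (\<Prod>e\<in>F. if odd (card {x\<in>S. below E r e x}) then -1 else 1)"
    by (rule prod.cong[OF refl]) (simp add: prod_sign_card[OF finS])
  finally show ?thesis .
qed

lemma fourier:
  assumes S: "S \<subseteq> V" "even (card S)"
  shows "(\<Sum>\<sigma>\<in>states V. state_prob E w \<sigma> * (\<Prod>x\<in>S. sgnb (\<sigma> x)))
       = (\<Prod>e\<in>E. if odd (card {x\<in>S. below E r e x}) then exp (-2 * w e) else 1)"
proof -
  define p where "p = flip_prob w"
  define z where "z = (\<lambda>e. if odd (card {x\<in>S. below E r e x}) then -1 else (1::real))"
  have finE': "finite E" by (rule finE[OF T])
  have inner: "(\<Sum>F\<in>Pow E. state_prob E w (construct V E r b F) * (\<Prod>x\<in>S. sgnb (construct V E r b F x)))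
      = 1/2 * (\<Prod>e\<in>E. if odd (card {x\<in>S. below E r e x}) then exp (-2 * w e) else 1)" for b
  proof -
    have "(\<Sum>F\<in>Pow E. state_prob E w (construct V E r b F) * (\<Prod>x\<in>S. sgnb (construct V E r b F x)))
        = (\<Sum>F\<in>Pow E. 1/2 * ((\<Prod>e\<in>F. p e * z e) * (\<Prod>e\<in>E - F. 1 - p e)))"
    proof (rule sum.cong[OF refl])
      fix F assume "F \<in> Pow E"
      hence F: "F \<subseteq> E" by simp
      have "(\<Prod>e\<in>E. if e \<in> F then p e else 1 - p e)
          = (\<Prod>e\<in>E - F. if e \<in> F then p e else 1 - p e) * (\<Prod>e\<in>F. if e \<in> F then p e else 1 - p e)"
        by (rule prod.subset_diff[OF F finE'])
      also have "\<dots> = (\<Prod>e\<in>E - F. 1 - p e) * (\<Prod>e\<in>F. p e)" by simp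
      finally have pe: "(\<Prod>e\<in>E. if e \<in> F then p e else 1 - p e) = (\<Prod>e\<in>E - F. 1 - p e) * (\<Prod>e\<in>F. p e)" .
      show "state_prob E w (construct V E r b F) * (\<Prod>x\<in>S. sgnb (construct V E r b F x))
          = 1/2 * ((\<Prod>e\<in>F. p e * z e) * (\<Prod>e\<in>E - F. 1 - p e))"
        unfolding state_prob_construct[OF F] sign_construct[OF F S] p_def[symmetric] pe
        by (simp add: prod.distrib z_def)
    qed
    also have "\<dots> = 1/2 * (\<Prod>e\<in>E. p e * z e + (1 - p e))"
      by (simp add: prod_add[OF finE'] sum_distrib_left)
    also have "(\<Prod>e\<in>E. p e * z e + (1 - p e)) = (\<Prod>e\<in>E. if odd (card {x\<in>S. below E r e x}) then exp (-2 * w e) else 1)"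
      by (rule prod.cong[OF refl]) (simp add: z_def p_def flip_prob_def field_simps)
    finally show ?thesis .
  qed
  have "(\<Sum>\<sigma>\<in>states V. state_prob E w \<sigma> * (\<Prod>x\<in>S. sgnb (\<sigma> x)))
      = (\<Sum>b\<in>UNIV. \<Sum>F\<in>Pow E. state_prob E w (construct V E r b F) * (\<Prod>x\<in>S. sgnb (construct V E r b F x)))"
    by (rule sum_states[OF T r])
  also have "\<dots> = (\<Sum>b::bool\<in>UNIV. 1/2 * (\<Prod>e\<in>E. if odd (card {x\<in>S. below E r e x}) then exp (-2 * w e) else 1))"
    by (rule sum.cong[OF refl], rule inner)
  also have "\<dots> = (\<Prod>e\<in>E. if odd (card {x\<in>S. below E r e x}) then exp (-2 * w e) else 1)"
    by (simp add: UNIV_bool)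
  finally show ?thesis .
qed

end

lemma count_even:
  assumes "finite A" "A \<noteq> {}"
  shows "(\<Sum>B\<in>Pow A. if even (card B) then 1 else (0::real)) = 2 ^ (card A - 1)"
proof -
  have n: "card A > 0" using assms by (simp add: card_gt_0_iff)
  have "(\<Sum>B\<in>Pow A. if even (card B) then 1 else (0::real))
      = (\<Sum>j\<le>card A. real (card A choose j) * (if even j then 1 else 0))"
    by (rule sum_pow_card[OF assms(1), where g="\<lambda>n. if even n then 1 else 0"])
  also have "\<dots> = (\<Sum>j\<le>card A. if even j then real (card A choose j) else 0)"
    by (rule sum.cong) auto
  finally have eq: "(\<Sum>B\<in>Pow A. if even (card B) then 1 else (0::real)) = \<dots>" .
  have "2 * (\<Sum>j\<le>card A. if even j then real (card A choose j) else 0) = 2 ^ card A"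
    using choose_even_sum[OF n] by simp
  moreover have "(2::real) ^ card A = 2 * 2 ^ (card A - 1)" using n by (cases "card A") auto
  ultimately show ?thesis using eq by simp
qed

lemma count_odd:
  assumes "finite A"
  shows "(\<Sum>B\<in>Pow A. if odd (card B) then 1 else (0::real)) = (if A = {} then 0 else 2 ^ (card A - 1))"
proof (cases "A = {}")
  case True thus ?thesis by simp
next
  case False
  have n: "card A > 0" using assms False by (simp add: card_gt_0_iff)
  have "(\<Sum>B\<in>Pow A. if odd (card B) then 1 else (0::real))
      = (\<Sum>j\<le>card A. real (card A choose j) * (if odd j then 1 else 0))"
    by (rule sum_pow_card[OF assms(1), where g="\<lambda>n. if odd n then 1 else 0"])
  also have "\<dots> = (\<Sum>j\<le>card A. if odd j then real (card A choose j) else 0)"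
    by (rule sum.cong) auto
  finally have eq: "(\<Sum>B\<in>Pow A. if odd (card B) then 1 else (0::real)) = \<dots>" .
  have "2 * (\<Sum>j\<le>card A. if odd j then real (card A choose j) else 0) = 2 ^ card A"
    using choose_odd_sum[OF n] by simp
  moreover have "(2::real) ^ card A = 2 * 2 ^ (card A - 1)" using n by (cases "card A") auto
  ultimately show ?thesis using eq False by simp
qed

lemma count_split:
  assumes A: "finite A" and K: "K \<subseteq> A"
  shows "(\<Sum>B\<in>Pow A. if even (card B) \<and> odd (card (B \<inter> K)) then 1 else (0::real))
       = (if K \<noteq> {} \<and> A - K \<noteq> {} then 2 ^ (card A - 2) else 0)"
proof -
  have finK: "finite K" using A K by (rule finite_subset[rotated])
  have finAK: "finite (A - K)" using A by simp
  define f where "f = (\<lambda>B::'a set. if odd (card B) then 1 else (0::real))"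
  have "(\<Sum>B\<in>Pow A. if even (card B) \<and> odd (card (B \<inter> K)) then 1 else (0::real))
      = (\<Sum>p\<in>Pow K \<times> Pow (A - K). f (fst p) * f (snd p))"
  proof (rule sum.reindex_bij_witness[where j="\<lambda>B. (B \<inter> K, B - K)" and i="\<lambda>p. fst p \<union> snd p"])
    fix B assume B: "B \<in> Pow A"
    thus "fst (B \<inter> K, B - K) \<union> snd (B \<inter> K, B - K) = B" by auto
    show "(B \<inter> K, B - K) \<in> Pow K \<times> Pow (A - K)" using B by auto
    have f1: "finite (B \<inter> K)" "finite (B - K)" using B A by (auto dest: finite_subset)
    have dj: "(B \<inter> K) \<inter> (B - K) = {}" by blast
    have c: "card B = card (B \<inter> K) + card (B - K)"
    proof -
      have "B \<inter> K \<union> (B - K) = B" by blast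
      thus ?thesis using card_Un_disjoint[OF f1 dj] by simp
    qed
    show "f (fst (B \<inter> K, B - K)) * f (snd (B \<inter> K, B - K))
        = (if even (card B) \<and> odd (card (B \<inter> K)) then 1 else 0)"
      unfolding c f_def by auto
  next
    fix p :: "'a set \<times> 'a set" assume p: "p \<in> Pow K \<times> Pow (A - K)"
    thus "((fst p \<union> snd p) \<inter> K, fst p \<union> snd p - K) = p" by (cases p) auto
    show "fst p \<union> snd p \<in> Pow A" using p K by auto
  qed
  also have "\<dots> = (\<Sum>B1\<in>Pow K. f B1) * (\<Sum>B2\<in>Pow (A - K). f B2)"
    by (simp add: sum_product sum.cartesian_product split_beta)
  also have "\<dots> = (if K = {} then 0 else 2 ^ (card K - 1)) * (if A - K = {} then 0 else 2 ^ (card (A - K) - 1))"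
    unfolding f_def using count_odd[OF finK] count_odd[OF finAK] by simp
  also have "\<dots> = (if K \<noteq> {} \<and> A - K \<noteq> {} then 2 ^ (card A - 2) else 0)"
  proof (cases "K \<noteq> {} \<and> A - K \<noteq> {}")
    case True
    hence k: "card K \<ge> 1" "card (A - K) \<ge> 1" using finK finAK
      by (auto simp: Suc_le_eq card_gt_0_iff)
    have "card A = card K + card (A - K)" using card_Diff_subset[OF finK K] card_mono[OF A K] by simp
    hence "card A - 2 = (card K - 1) + (card (A - K) - 1)" using k by simp
    thus ?thesis using True by (simp add: power_add)
  next
    case False thus ?thesis by auto
  qed
  finally show ?thesis .
qed

lemma const_ident:
  assumes A: "finite A" "A \<noteq> {}"
  shows "(\<Sum>B\<in>{B\<in>Pow A. even (card B)}. \<Prod>x\<in>B. sgnb (\<sigma> x))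
       = (if \<exists>a\<in>A. \<exists>b\<in>A. \<sigma> a \<noteq> \<sigma> b then 0 else 2 ^ (card A - 1))"
proof -
  have P1: "(\<Sum>B\<in>Pow A. \<Prod>x\<in>B. sgnb (\<sigma> x)) = (\<Prod>x\<in>A. sgnb (\<sigma> x) + 1)"
    using prod_add[OF A(1), of "\<lambda>x. sgnb (\<sigma> x)" "\<lambda>_. 1"] by simp
  have P2: "(\<Sum>B\<in>Pow A. (-1) ^ card B * (\<Prod>x\<in>B. sgnb (\<sigma> x))) = (\<Prod>x\<in>A. 1 - sgnb (\<sigma> x))"
    using prod_diff_conv_sum[OF A(1), of "\<lambda>_. 1" "\<lambda>x. sgnb (\<sigma> x)"] by simp
  have "2 * (\<Sum>B\<in>{B\<in>Pow A. even (card B)}. \<Prod>x\<in>B. sgnb (\<sigma> x))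
      = 2 * (\<Sum>B\<in>Pow A. if even (card B) then \<Prod>x\<in>B. sgnb (\<sigma> x) else 0)"
    using sum.inter_filter[OF finite_Pow_iff[THEN iffD2, OF A(1)], of "\<lambda>B. \<Prod>x\<in>B. sgnb (\<sigma> x)" "\<lambda>B. even (card B)"]
    by simp
  also have "\<dots> = (\<Sum>B\<in>Pow A. (\<Prod>x\<in>B. sgnb (\<sigma> x)) + (-1) ^ card B * (\<Prod>x\<in>B. sgnb (\<sigma> x)))"
    by (subst sum_distrib_left, rule sum.cong) auto
  also have "\<dots> = (\<Prod>x\<in>A. sgnb (\<sigma> x) + 1) + (\<Prod>x\<in>A. 1 - sgnb (\<sigma> x))"
    by (simp add: sum.distrib P1 P2)
  finally have eq0: "2 * (\<Sum>B\<in>{B\<in>Pow A. even (card B)}. \<Prod>x\<in>B. sgnb (\<sigma> x))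
     = (\<Prod>x\<in>A. sgnb (\<sigma> x) + 1) + (\<Prod>x\<in>A. 1 - sgnb (\<sigma> x))" .
  have Q1: "(\<Prod>x\<in>A. sgnb (\<sigma> x) + 1) = (if \<forall>x\<in>A. \<not> \<sigma> x then 2 ^ card A else 0)"
  proof (cases "\<forall>x\<in>A. \<not> \<sigma> x")
    case True
    hence "(\<Prod>x\<in>A. sgnb (\<sigma> x) + 1) = (\<Prod>x\<in>A. 2)" by (simp add: sgnb_def)
    thus ?thesis using True by simp
  next
    case False
    then obtain x where "x \<in> A" "\<sigma> x" by auto
    hence "(\<Prod>x\<in>A. sgnb (\<sigma> x) + 1) = 0"
      by (intro prod_zero[OF A(1)] bexI[of _ x]) (simp_all add: sgnb_def)
    thus ?thesis using False by simp
  qed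
  have Q2: "(\<Prod>x\<in>A. 1 - sgnb (\<sigma> x)) = (if \<forall>x\<in>A. \<sigma> x then 2 ^ card A else 0)"
  proof (cases "\<forall>x\<in>A. \<sigma> x")
    case True
    hence "(\<Prod>x\<in>A. 1 - sgnb (\<sigma> x)) = (\<Prod>x\<in>A. 2)" by (simp add: sgnb_def)
    thus ?thesis using True by simp
  next
    case False
    then obtain x where "x \<in> A" "\<not> \<sigma> x" by auto
    hence "(\<Prod>x\<in>A. 1 - sgnb (\<sigma> x)) = 0"
      by (intro prod_zero[OF A(1)] bexI[of _ x]) (simp_all add: sgnb_def)
    thus ?thesis using False by simp
  qed
  have eq: "2 * (\<Sum>B\<in>{B\<in>Pow A. even (card B)}. \<Prod>x\<in>B. sgnb (\<sigma> x))
     = (if \<forall>x\<in>A. \<not> \<sigma> x then 2 ^ card A else 0) + (if \<forall>x\<in>A. \<sigma> x then 2 ^ card A else 0)"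
    unfolding eq0 Q1 Q2 by (rule refl)
  have n: "card A > 0" using A by (simp add: card_gt_0_iff)
  have p2: "(2::real) ^ card A = 2 * 2 ^ (card A - 1)" using n by (cases "card A") auto
  obtain a where a: "a \<in> A" using A(2) by auto
  define S where "S = (\<Sum>B\<in>{B\<in>Pow A. even (card B)}. \<Prod>x\<in>B. sgnb (\<sigma> x))"
  show ?thesis
  proof (cases "\<exists>a\<in>A. \<exists>b\<in>A. \<sigma> a \<noteq> \<sigma> b")
    case True
    hence c1: "(\<forall>x\<in>A. \<not> \<sigma> x) = False" and c2: "(\<forall>x\<in>A. \<sigma> x) = False" by auto
    have "2 * S = 0"
      using eq unfolding c1 c2 S_def by simp
    hence "S = 0" by simp
    thus ?thesis unfolding if_P[OF True] S_def .
  next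
    case False
    have allc: "\<forall>x\<in>A. \<sigma> x = \<sigma> a" using False a by blast
    have "2 * S = 2 * 2 ^ (card A - 1)"
    proof (cases "\<sigma> a")
      case True
      hence c1: "(\<forall>x\<in>A. \<not> \<sigma> x) = False" and c2: "(\<forall>x\<in>A. \<sigma> x) = True"
        using allc a by blast+
      show ?thesis using eq unfolding c1 c2 p2 S_def by simp
    next
      case F: False
      hence c1: "(\<forall>x\<in>A. \<not> \<sigma> x) = True" and c2: "(\<forall>x\<in>A. \<sigma> x) = False"
        using allc a by blast+
      show ?thesis using eq unfolding c1 c2 p2 S_def by simp
    qed
    hence "S = 2 ^ (card A - 1)" by simp
    thus ?thesis unfolding if_not_P[OF False] S_def .
  qed
qed

lemma states_finite:
  assumes "finite V"
  shows "finite (states V)"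
proof -
  have "states V \<subseteq> (\<lambda>S x. x \<in> S) ` Pow V"
  proof
    fix \<sigma> assume s: "\<sigma> \<in> states V"
    have "\<sigma> = (\<lambda>x. x \<in> {x. \<sigma> x})" by simp
    moreover have "{x. \<sigma> x} \<in> Pow V" using s by (auto simp: states_def)
    ultimately show "\<sigma> \<in> (\<lambda>S x. x \<in> S) ` Pow V" by blast
  qed
  moreover have "finite ((\<lambda>S x. x \<in> S) ` Pow V)" using assms by simp
  ultimately show ?thesis by (rule finite_subset)
qed

definition Qf :: "'v set set \<Rightarrow> 'v \<Rightarrow> ('v set \<Rightarrow> real) \<Rightarrow> 'v set \<Rightarrow> real" where
  "Qf E r w B = (\<Prod>e\<in>E. if odd (card {x\<in>B. below E r e x}) then exp (-2 * w e) else 1)"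

lemma Qf_empty: "Qf E r w {} = 1"
  by (simp add: Qf_def)

lemma ln_Qf: "finite E \<Longrightarrow> ln (Qf E r w B) = (\<Sum>e\<in>E. if odd (card {x\<in>B. below E r e x}) then -2 * w e else 0)"
proof -
  assume fin: "finite E"
  have "Qf E r w B = exp (\<Sum>e\<in>E. if odd (card {x\<in>B. below E r e x}) then -2 * w e else 0)"
    unfolding Qf_def exp_sum[OF fin] by (rule prod.cong) auto
  thus ?thesis by simp
qed

lemma if_helper2: "N \<noteq> 0 \<Longrightarrow> (if c then 0 else (1::real)) = (if c then 0 else N) / N"
  by simp

lemma if_helper: "(if c then p else 0) = p - p * (if c then 0 else (1::real))"
  by simp

context
  fixes V :: "'v set" and E :: "'v set set" and r :: 'v
  assumes T: "is_tree V E" and r: "r \<in> V"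
begin

lemma split_formula:
  assumes A: "A \<subseteq> V" "A \<noteq> {}"
  shows "split_prob V E w A = 1 - (\<Sum>B\<in>{B\<in>Pow A. even (card B)}. Qf E r w B) / 2 ^ (card A - 1)"
proof -
  have finA: "finite A" using finV[OF T] A(1) by (rule finite_subset[rotated])
  have finS: "finite (states V)" by (rule states_finite[OF finV[OF T]])
  define P where "P = state_prob E w"
  define EA where "EA = {B\<in>Pow A. even (card B)}"
  have finEA: "finite EA" unfolding EA_def using finA by simp
  define N where "N = (2::real) ^ (card A - 1)"
  have N0: "N \<noteq> 0" unfolding N_def by simp
  have tot: "(\<Sum>\<sigma>\<in>states V. P \<sigma>) = 1"
    using fourier[OF T r, of "{}" w] by (simp add: P_def)
  have ci: "(if \<exists>a\<in>A. \<exists>b\<in>A. \<sigma> a \<noteq> \<sigma> b then 0 else 1) = (\<Sum>B\<in>EA. \<Prod>x\<in>B. sgnb (\<sigma> x)) / N" for \<sigma>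
    unfolding EA_def const_ident[OF finA A(2)] N_def by (rule if_helper2) simp
  have "split_prob V E w A = (\<Sum>\<sigma>\<in>states V. if \<exists>a\<in>A. \<exists>b\<in>A. \<sigma> a \<noteq> \<sigma> b then P \<sigma> else 0)"
    unfolding split_prob_def P_def by (rule sum.inter_filter[OF finS])
  also have "\<dots> = (\<Sum>\<sigma>\<in>states V. P \<sigma> - P \<sigma> * (if \<exists>a\<in>A. \<exists>b\<in>A. \<sigma> a \<noteq> \<sigma> b then 0 else 1))"
    by (rule sum.cong[OF refl], rule if_helper)
  also have "\<dots> = 1 - (\<Sum>\<sigma>\<in>states V. P \<sigma> * ((\<Sum>B\<in>EA. \<Prod>x\<in>B. sgnb (\<sigma> x)) / N))"
    by (simp only: sum_subtractf tot ci)
  also have "(\<Sum>\<sigma>\<in>states V. P \<sigma> * ((\<Sum>B\<in>EA. \<Prod>x\<in>B. sgnb (\<sigma> x)) / N))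
      = (\<Sum>\<sigma>\<in>states V. \<Sum>B\<in>EA. P \<sigma> * (\<Prod>x\<in>B. sgnb (\<sigma> x))) / N"
    by (simp add: sum_divide_distrib sum_distrib_left)
  also have "\<dots> = (\<Sum>B\<in>EA. \<Sum>\<sigma>\<in>states V. P \<sigma> * (\<Prod>x\<in>B. sgnb (\<sigma> x))) / N"
    by (subst sum.swap) (rule refl)
  also have "(\<Sum>B\<in>EA. \<Sum>\<sigma>\<in>states V. P \<sigma> * (\<Prod>x\<in>B. sgnb (\<sigma> x))) = (\<Sum>B\<in>EA. Qf E r w B)"
  proof (rule sum.cong[OF refl])
    fix B assume "B \<in> EA"
    hence "B \<subseteq> V" "even (card B)" using A unfolding EA_def by auto
    thus "(\<Sum>\<sigma>\<in>states V. P \<sigma> * (\<Prod>x\<in>B. sgnb (\<sigma> x))) = Qf E r w B"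
      unfolding P_def Qf_def by (rule fourier[OF T r])
  qed
  finally show ?thesis unfolding EA_def N_def .
qed

end

lemma c_val: "n \<ge> 1 \<Longrightarrow> 2 powr (1 - real n) = 1 / 2 ^ (n - 1)"
  using pow_lemma[of n] by (simp add: field_simps)

context
  fixes V :: "'v set" and E :: "'v set set" and r :: 'v
  assumes T: "is_tree V E" and r: "r \<in> V"
begin

lemma s_G:
  assumes X: "X \<subseteq> V" and A: "A \<in> even_subsets X"
  shows "split_prob V E w A = (\<Sum>D\<in>even_subsets X. Gmat A D * (1 - Qf E r w D))"
proof -
  have finX: "finite X" using finV[OF T] X by (rule finite_subset[rotated])
  note fa = ES_facts[OF finX A]
  define n where "n = card A"
  define c where "c = (2::real) powr (1 - real n)"
  have c: "c = 1 / 2 ^ (n - 1)" unfolding c_def n_def by (rule c_val[OF fa(5)])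
  define EA where "EA = {B\<in>Pow A. even (card B)}"
  have finEA: "finite EA" unfolding EA_def using fa(1) by simp
  have eA: "{} \<in> EA" unfolding EA_def by simp
  have finES: "finite (even_subsets X)" unfolding even_subsets_def
    by (rule finite_subset[of _ "Pow X"]) (use finX in auto)
  have set: "even_subsets X \<inter> {D. D \<subseteq> A} = EA - {{}}"
    using fa(2) unfolding EA_def even_subsets_def by auto
  have "(\<Sum>D\<in>even_subsets X. Gmat A D * (1 - Qf E r w D))
      = (\<Sum>D\<in>even_subsets X. if D \<in> {D. D \<subseteq> A} then c * (1 - Qf E r w D) else 0)"
    by (rule sum.cong[OF refl]) (simp add: Gmat_def c_def n_def)
  also have "\<dots> = (\<Sum>D\<in>even_subsets X \<inter> {D. D \<subseteq> A}. c * (1 - Qf E r w D))"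
    by (rule sum.inter_restrict[OF finES, symmetric])
  also have "\<dots> = (\<Sum>D\<in>EA - {{}}. c * (1 - Qf E r w D))"
    by (simp only: set)
  also have "\<dots> = c * ((\<Sum>D\<in>EA - {{}}. 1) - (\<Sum>D\<in>EA - {{}}. Qf E r w D))"
    by (simp add: sum_distrib_left sum_subtractf right_diff_distrib)
  also have "(\<Sum>D\<in>EA - {{}}. (1::real)) = (\<Sum>D\<in>EA. 1) - 1"
    using sum.remove[OF finEA eA, of "\<lambda>_. (1::real)"] by simp
  also have "(\<Sum>D\<in>EA. (1::real)) = 2 ^ (n - 1)"
  proof -
    have "(\<Sum>D\<in>EA. (1::real)) = (\<Sum>B\<in>Pow A. if even (card B) then 1 else 0)"
      unfolding EA_def by (rule sum.inter_filter) (use fa(1) in simp)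
    thus ?thesis using count_even[OF fa(1) fa(3)] by (simp add: n_def)
  qed
  also have "(\<Sum>D\<in>EA - {{}}. Qf E r w D) = (\<Sum>D\<in>EA. Qf E r w D) - 1"
    using sum.remove[OF finEA eA, of "Qf E r w"] by (simp add: Qf_empty)
  finally have rhs: "(\<Sum>D\<in>even_subsets X. Gmat A D * (1 - Qf E r w D))
      = c * (2 ^ (n - 1) - (\<Sum>D\<in>EA. Qf E r w D))" by simp
  have "split_prob V E w A = 1 - (\<Sum>D\<in>EA. Qf E r w D) / 2 ^ (n - 1)"
    unfolding EA_def n_def by (rule split_formula[OF T r]) (use fa X in auto)
  thus ?thesis unfolding rhs c by (simp add: field_simps)
qed

lemma t_eq:
  assumes X: "X \<subseteq> V" and B: "B \<in> even_subsets X"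
  shows "(\<Sum>C\<in>even_subsets X. Ginv B C * split_prob V E w C) = 1 - Qf E r w B"
proof -
  have finX: "finite X" using finV[OF T] X by (rule finite_subset[rotated])
  have finES: "finite (even_subsets X)" unfolding even_subsets_def
    by (rule finite_subset[of _ "Pow X"]) (use finX in auto)
  have "(\<Sum>C\<in>even_subsets X. Ginv B C * split_prob V E w C)
      = (\<Sum>C\<in>even_subsets X. Ginv B C * (\<Sum>D\<in>even_subsets X. Gmat C D * (1 - Qf E r w D)))"
    by (rule sum.cong[OF refl]) (simp add: s_G[OF X])
  also have "\<dots> = (\<Sum>C\<in>even_subsets X. \<Sum>D\<in>even_subsets X. Ginv B C * Gmat C D * (1 - Qf E r w D))"
    by (simp add: sum_distrib_left mult.assoc)
  also have "\<dots> = (\<Sum>D\<in>even_subsets X. \<Sum>C\<in>even_subsets X. Ginv B C * Gmat C D * (1 - Qf E r w D))"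
    by (rule sum.swap)
  also have "\<dots> = (\<Sum>D\<in>even_subsets X. (\<Sum>C\<in>even_subsets X. Ginv B C * Gmat C D) * (1 - Qf E r w D))"
    by (simp add: sum_distrib_right)
  also have "\<dots> = (\<Sum>D\<in>even_subsets X. (if B = D then 1 else 0) * (1 - Qf E r w D))"
    by (rule sum.cong[OF refl]) (simp add: part2[OF finX B])
  also have "\<dots> = 1 - Qf E r w B"
    using B finES by (simp add: if_distrib[of "\<lambda>x. x * _"] cong: if_cong)
  finally show ?thesis .
qed

lemma span_char:
  assumes A: "A \<subseteq> V"
  shows "span_edges E A = {e\<in>E. \<exists>a\<in>A. \<exists>b\<in>A. \<not> reach (E - {e}) a b}"
proof
  have Efam: "E \<subseteq> E \<and> (\<forall>a\<in>A. \<forall>b\<in>A. reach E a b)" using conn[OF T] A by auto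
  show "span_edges E A \<subseteq> {e\<in>E. \<exists>a\<in>A. \<exists>b\<in>A. \<not> reach (E - {e}) a b}"
  proof
    fix e assume e: "e \<in> span_edges E A"
    have eE: "e \<in> E" using e Efam unfolding span_edges_def by blast
    show "e \<in> {e\<in>E. \<exists>a\<in>A. \<exists>b\<in>A. \<not> reach (E - {e}) a b}"
    proof (rule ccontr)
      assume "e \<notin> {e\<in>E. \<exists>a\<in>A. \<exists>b\<in>A. \<not> reach (E - {e}) a b}"
      hence "E - {e} \<subseteq> E \<and> (\<forall>a\<in>A. \<forall>b\<in>A. reach (E - {e}) a b)" using eE by auto
      hence "e \<in> E - {e}" using e unfolding span_edges_def by blast
      thus False by simp
    qed
  qed
next
  show "{e\<in>E. \<exists>a\<in>A. \<exists>b\<in>A. \<not> reach (E - {e}) a b} \<subseteq> span_edges E A"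
  proof
    fix e assume "e \<in> {e\<in>E. \<exists>a\<in>A. \<exists>b\<in>A. \<not> reach (E - {e}) a b}"
    then obtain a b where e: "e \<in> E" "a \<in> A" "b \<in> A" "\<not> reach (E - {e}) a b" by blast
    show "e \<in> span_edges E A"
      unfolding span_edges_def
    proof (rule InterI)
      fix F assume "F \<in> {F. F \<subseteq> E \<and> (\<forall>a\<in>A. \<forall>b\<in>A. reach F a b)}"
      hence F: "F \<subseteq> E" "reach F a b" using e by auto
      show "e \<in> F"
      proof (rule ccontr)
        assume "e \<notin> F"
        hence "F \<subseteq> E - {e}" using F by auto
        hence "reach (E - {e}) a b" using reach_mono[OF F(2)] by simp
        thus False using e by simp
      qed
    qed
  qed
qed

lemma span_K:
  assumes e: "e \<in> E" and A: "A \<subseteq> V"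
  shows "(\<exists>a\<in>A. \<exists>b\<in>A. \<not> reach (E - {e}) a b) \<longleftrightarrow>
         ({x\<in>A. below E r e x} \<noteq> {} \<and> A - {x\<in>A. below E r e x} \<noteq> {})"
proof -
  have "\<not> reach (E - {e}) a b \<longleftrightarrow> (below E r e a \<noteq> below E r e b)" if "a \<in> A" "b \<in> A" for a b
    using same_side[OF T r e] A that by auto
  thus ?thesis by auto
qed

end

context
  fixes V :: "'v set" and E :: "'v set set" and r :: 'v
  assumes T: "is_tree V E" and r: "r \<in> V"
begin

lemma edge_coeff:
  assumes X: "X \<subseteq> V" and A: "A \<in> even_subsets X"
  shows "2 * (\<Sum>B\<in>even_subsets X. Gmat A B * (if odd (card {x\<in>B. below E r e x}) then 1 else 0))
       = (if {x\<in>A. below E r e x} \<noteq> {} \<and> A - {x\<in>A. below E r e x} \<noteq> {} then 1 else (0::real))"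
proof -
  have finX: "finite X" using finV[OF T] X by (rule finite_subset[rotated])
  note fa = ES_facts[OF finX A]
  define K where "K = {x\<in>A. below E r e x}"
  have KA: "K \<subseteq> A" unfolding K_def by auto
  define n where "n = card A"
  define c where "c = (2::real) powr (1 - real n)"
  have c: "c = 1 / 2 ^ (n - 1)" unfolding c_def n_def by (rule c_val[OF fa(5)])
  define EA where "EA = {B\<in>Pow A. even (card B)}"
  have finEA: "finite EA" unfolding EA_def using fa(1) by simp
  have eA: "{} \<in> EA" unfolding EA_def by simp
  have finES: "finite (even_subsets X)" unfolding even_subsets_def
    by (rule finite_subset[of _ "Pow X"]) (use finX in auto)
  have set: "even_subsets X \<inter> {D. D \<subseteq> A} = EA - {{}}"
    using fa(2) unfolding EA_def even_subsets_def by auto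
  define f where "f = (\<lambda>B. if odd (card (B \<inter> K)) then 1 else (0::real))"
  have "(\<Sum>B\<in>even_subsets X. Gmat A B * (if odd (card {x\<in>B. below E r e x}) then 1 else 0))
      = (\<Sum>B\<in>even_subsets X. if B \<in> {D. D \<subseteq> A} then c * f B else 0)"
  proof (rule sum.cong[OF refl])
    fix B assume "B \<in> even_subsets X"
    show "Gmat A B * (if odd (card {x\<in>B. below E r e x}) then 1 else 0) = (if B \<in> {D. D \<subseteq> A} then c * f B else 0)"
    proof (cases "B \<subseteq> A")
      case True
      hence "{x\<in>B. below E r e x} = B \<inter> K" unfolding K_def by auto
      thus ?thesis using True by (simp add: Gmat_def c_def n_def f_def)
    next
      case False thus ?thesis by (simp add: Gmat_def)
    qed
  qed
  also have "\<dots> = (\<Sum>D\<in>even_subsets X \<inter> {D. D \<subseteq> A}. c * f D)"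
    by (rule sum.inter_restrict[OF finES, symmetric])
  also have "\<dots> = (\<Sum>D\<in>EA - {{}}. c * f D)"
    by (simp only: set)
  also have "\<dots> = (\<Sum>D\<in>EA. c * f D)"
    using sum.remove[OF finEA eA, of "\<lambda>D. c * f D"] by (simp add: f_def)
  also have "\<dots> = c * (\<Sum>B\<in>Pow A. if even (card B) \<and> odd (card (B \<inter> K)) then 1 else 0)"
  proof -
    have "(\<Sum>D\<in>EA. f D) = (\<Sum>B\<in>Pow A. if even (card B) then f B else 0)"
      unfolding EA_def by (rule sum.inter_filter) (use fa(1) in simp)
    also have "\<dots> = (\<Sum>B\<in>Pow A. if even (card B) \<and> odd (card (B \<inter> K)) then 1 else 0)"
      by (rule sum.cong[OF refl]) (simp add: f_def)
    finally show ?thesis by (simp only: sum_distrib_left[symmetric])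
  qed
  also have "\<dots> = c * (if K \<noteq> {} \<and> A - K \<noteq> {} then 2 ^ (card A - 2) else 0)"
    by (simp only: count_split[OF fa(1) KA])
  finally have eq: "(\<Sum>B\<in>even_subsets X. Gmat A B * (if odd (card {x\<in>B. below E r e x}) then 1 else 0))
      = c * (if K \<noteq> {} \<and> A - K \<noteq> {} then 2 ^ (card A - 2) else 0)" .
  show ?thesis
  proof (cases "K \<noteq> {} \<and> A - K \<noteq> {}")
    case True
    have "card K \<ge> 1" "card (A - K) \<ge> 1" using True fa(1) KA
      by (auto simp: Suc_le_eq card_gt_0_iff intro: finite_subset)
    moreover have "card A = card K + card (A - K)"
      using card_Diff_subset[OF finite_subset[OF KA fa(1)] KA] card_mono[OF fa(1) KA] by simp
    ultimately have n2: "n \<ge> 2" unfolding n_def by simp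
    hence "(2::real) ^ (n - 1) = 2 * 2 ^ (n - 2)"
      by (metis Suc_diff_Suc Suc_1 diff_Suc_1 le_add_diff_inverse2 power_Suc less_le_trans one_less_numeral_iff semiring_norm(76) Suc_le_lessD)
    hence "2 * (c * 2 ^ (n - 2)) = 1" unfolding c by simp
    thus ?thesis unfolding eq K_def[symmetric] if_P[OF True] by (simp add: n_def)
  next
    case False
    show ?thesis unfolding eq K_def[symmetric] if_not_P[OF False] by simp
  qed
qed

end

theorem theorem7:
  fixes V :: "'v set" and E :: "'v set set" and X :: "'v set" and w :: "'v set \<Rightarrow> real"
  assumes "phylo_tree V E X"
    and "\<forall>e\<in>E. w e \<ge> 0"
  shows "(\<forall>A\<in>even_subsets X. \<forall>C\<in>even_subsets X.
            (\<Sum>B\<in>even_subsets X. Gmat A B * Ginv B C) = (if A = C then 1 else 0))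
       \<and> (\<forall>A\<in>even_subsets X. \<forall>C\<in>even_subsets X.
            (\<Sum>B\<in>even_subsets X. Ginv A B * Gmat B C) = (if A = C then 1 else 0))
       \<and> (\<forall>A\<in>even_subsets X. tree_length E w A =
            - (\<Sum>B\<in>even_subsets X. Gmat A B *
                 ln (1 - (\<Sum>C\<in>even_subsets X. Ginv B C * split_prob V E w C))))"
proof -
  have T: "is_tree V E" and XV: "X \<subseteq> V" using assms(1) unfolding phylo_tree_def by auto
  obtain r where r: "r \<in> V" using T unfolding is_tree_def by auto
  have finX: "finite X" using finV[OF T] XV by (rule finite_subset[rotated])
  have finE: "finite E" by (rule finE[OF T])
  have P3: "tree_length E w A =
            - (\<Sum>B\<in>even_subsets X. Gmat A B *
                 ln (1 - (\<Sum>C\<in>even_subsets X. Ginv B C * split_prob V E w C)))"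
    if A: "A \<in> even_subsets X" for A
  proof -
    note fa = ES_facts[OF finX A]
    have AV: "A \<subseteq> V" using fa(2) XV by auto
    define K where "K = (\<lambda>e. {x\<in>A. below E r e x})"
    define L where "L = (\<lambda>e B. if odd (card {x\<in>B. below E r e x}) then -2 * w e else (0::real))"
    have "- (\<Sum>B\<in>even_subsets X. Gmat A B *
                 ln (1 - (\<Sum>C\<in>even_subsets X. Ginv B C * split_prob V E w C)))
        = - (\<Sum>B\<in>even_subsets X. Gmat A B * (\<Sum>e\<in>E. L e B))"
    proof -
      have "ln (1 - (\<Sum>C\<in>even_subsets X. Ginv B C * split_prob V E w C)) = (\<Sum>e\<in>E. L e B)"
        if B: "B \<in> even_subsets X" for B
        unfolding t_eq[OF T r XV B] L_def using ln_Qf[OF finE] by simp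
      thus ?thesis by (simp cong: sum.cong)
    qed
    also have "\<dots> = (\<Sum>e\<in>E. w e * (2 * (\<Sum>B\<in>even_subsets X. Gmat A B * (if odd (card {x\<in>B. below E r e x}) then 1 else 0))))"
    proof -
      have "- (\<Sum>B\<in>even_subsets X. Gmat A B * (\<Sum>e\<in>E. L e B))
          = (\<Sum>B\<in>even_subsets X. \<Sum>e\<in>E. - (Gmat A B * L e B))"
        by (simp add: sum_distrib_left sum_negf)
      also have "\<dots> = (\<Sum>e\<in>E. \<Sum>B\<in>even_subsets X. - (Gmat A B * L e B))"
        by (rule sum.swap)
      also have "\<dots> = (\<Sum>e\<in>E. w e * (2 * (\<Sum>B\<in>even_subsets X. Gmat A B * (if odd (card {x\<in>B. below E r e x}) then 1 else 0))))"
        by (rule sum.cong[OF refl]) (simp add: sum_distrib_left L_def if_distrib mult_ac cong: if_cong)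
      finally show ?thesis .
    qed
    also have "\<dots> = (\<Sum>e\<in>E. w e * (if K e \<noteq> {} \<and> A - K e \<noteq> {} then 1 else 0))"
      by (rule sum.cong[OF refl]) (simp only: edge_coeff[OF T r XV A] K_def)
    also have "\<dots> = tree_length E w A"
    proof -
      have "tree_length E w A = (\<Sum>e\<in>{e\<in>E. \<exists>a\<in>A. \<exists>b\<in>A. \<not> reach (E - {e}) a b}. w e)"
        unfolding tree_length_def span_char[OF T r AV] ..
      also have "\<dots> = (\<Sum>e\<in>E. if \<exists>a\<in>A. \<exists>b\<in>A. \<not> reach (E - {e}) a b then w e else 0)"
        by (rule sum.inter_filter[OF finE])
      also have "\<dots> = (\<Sum>e\<in>E. w e * (if K e \<noteq> {} \<and> A - K e \<noteq> {} then 1 else 0))"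
      proof (rule sum.cong[OF refl])
        fix e assume e: "e \<in> E"
        show "(if \<exists>a\<in>A. \<exists>b\<in>A. \<not> reach (E - {e}) a b then w e else 0) = w e * (if K e \<noteq> {} \<and> A - K e \<noteq> {} then 1 else 0)"
          unfolding span_K[OF T r e AV] K_def by auto
      qed
      finally show ?thesis by simp
    qed
    finally show ?thesis by simp
  qed
  show ?thesis
    using part1[OF finX] part2[OF finX] P3 by blast
qed

end
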